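(* Let $\mathbb{F}$ be a field and let $(\mathbb{F}(\alpha,\beta),\sigma)$ be a bivariate difference field extension of $\mathbb{F}$ with $\sigma|_{\mathbb{F}}=\mathrm{id}$, $\sigma(\alpha)=\beta$, $\sigma(\beta)=u\alpha+v\beta$ ($u\in\mathbb{F}\setminus\{0\}$, $v\in\mathbb{F}$). Let $A=\begin{pmatrix}0&u\\1&v\end{pmatrix}$ and assume that $A$ has two distinct eigenvalues $\lambda_1\neq\lambda_2$ in $\mathbb{F}$ such that $\lambda_1/\lambda_2$ is not a root of unity. Let $p,q\in\mathbb{F}[\alpha,\beta]$ be nonzero homogeneous polynomials such that $g=\frac{p}{q}$ is semi-invariant. Then there exists an integer $i$ with $-\deg q\le i\le \deg p$ such that $$\frac{\sigma g}{g}=\lambda_1^{\,i}\,\lambda_2^{\,\deg p-\deg q-i}.$$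
   Context: A bivariate difference field extension $(\mathbb{F}(\alpha,\beta),\sigma)$ of a difference field $(\mathbb{F},\sigma)$ is the rational function field $\mathbb{F}(\alpha,\beta)$ in two algebraically independent transcendental elements $\alpha,\beta$ over $\mathbb{F}$, together with an automorphism $\sigma$ of $\mathbb{F}(\alpha,\beta)$ extending $\sigma$ on $\mathbb{F}$ and satisfying $\sigma(\alpha)=\beta$, $\sigma(\beta)=u\alpha+v\beta$ with $v\in\mathbb{F}$, $u\in\mathbb{F}\setminus\{0\}$. $\deg$ denotes total degree in $\alpha,\beta$; a polynomial is homogeneous if all its monomials have the same total degree. An element $a\in\mathbb{F}(\alpha,\beta)$ is called semi-invariant if $\sigma a=ca$ for some $c\in\mathbb{F}\setminus\{0\}$. *)

theory Defs
  imports "HOL-Computational_Algebra.Polynomial" "HOL-Computational_Algebra.Fraction_Field"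
begin

text \<open>Bivariate polynomials F[alpha,beta] are represented as 'a poly poly:
  the outer variable is beta, the inner variable is alpha, so the coefficient
  of alpha^i beta^j in p is coeff (coeff p j) i.\<close>

definition bconst :: "'a::comm_ring_1 \<Rightarrow> 'a poly poly" where
  "bconst a = [:[:a:]:]"

definition alpha :: "'a::comm_ring_1 poly poly" where
  "alpha = [:[:0, 1:]:]"

definition beta :: "'a::comm_ring_1 poly poly" where
  "beta = [:0, 1:]"

text \<open>The automorphism sigma restricted to F[alpha,beta]: identity on F,
  alpha maps to beta, beta maps to u alpha + v beta.\<close>
definition bsigma :: "'a::comm_ring_1 \<Rightarrow> 'a \<Rightarrow> 'a poly poly \<Rightarrow> 'a poly poly" where
  "bsigma u v p =
     poly (map_poly (\<lambda>c. poly (map_poly bconst c) beta) p)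
          (bconst u * alpha + bconst v * beta)"

definition fsigma :: "'a::field \<Rightarrow> 'a \<Rightarrow> 'a poly poly \<Rightarrow> 'a poly poly \<Rightarrow> 'a poly poly fract" where
  "fsigma u v p q = Fract (bsigma u v p) (bsigma u v q)"

definition total_degree :: "'a::zero poly poly \<Rightarrow> nat" where
  "total_degree p = Max ({i + j | i j. coeff (coeff p j) i \<noteq> 0} \<union> {0})"

definition homogeneous :: "'a::zero poly poly \<Rightarrow> bool" where
  "homogeneous p \<longleftrightarrow> (\<forall>i j. coeff (coeff p j) i \<noteq> 0 \<longrightarrow> i + j = total_degree p)"

definition eigenvalue_A :: "'a::field \<Rightarrow> 'a \<Rightarrow> 'a \<Rightarrow> bool" where
  "eigenvalue_A u v l \<longleftrightarrow>
     (\<exists>x1 x2. (x1, x2) \<noteq> (0, 0) \<and> 0 * x1 + u * x2 = l * x1 \<and> 1 * x1 + v * x2 = l * x2)"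

definition root_of_unity :: "'a::field \<Rightarrow> bool" where
  "root_of_unity z \<longleftrightarrow> (\<exists>n::nat. n > 0 \<and> z ^ n = 1)"

end

theory Submission
  imports Defs
begin

lemma map_poly_add_hom:
  assumes "f 0 = 0" "\<And>a b. f (a + b) = f a + f b"
  shows "map_poly f (p + q) = map_poly f p + map_poly f q"
  by (intro poly_eqI) (simp add: coeff_map_poly assms)

lemma map_poly_mult_hom:
  fixes f :: "'b::comm_ring_1 \<Rightarrow> 'c::comm_ring_1"
  assumes "f 0 = 0" "\<And>a b. f (a + b) = f a + f b" "\<And>a b. f (a * b) = f a * f b"
  shows "map_poly f (p * q) = map_poly f p * map_poly f q"
proof (induction p)
  case 0 then show ?case by simp
next
  case (pCons a p)
  have "map_poly f (pCons a p * q) = map_poly f (smult a q + pCons 0 (p * q))"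
    by (simp add: mult_pCons_left)
  also have "\<dots> = smult (f a) (map_poly f q) + pCons 0 (map_poly f p * map_poly f q)"
    by (simp add: map_poly_add_hom[OF assms(1,2)] map_poly_smult assms map_poly_pCons pCons.IH)
  also have "\<dots> = map_poly f (pCons a p) * map_poly f q"
    by (simp add: map_poly_pCons assms mult_pCons_left)
  finally show ?case .
qed

lemma poly_hom:
  fixes h :: "'b::comm_ring_1 \<Rightarrow> 'c::comm_ring_1"
  assumes "h 0 = 0" "\<And>a b. h (a + b) = h a + h b" "\<And>a b. h (a * b) = h a * h b"
  shows "h (poly P x) = poly (map_poly h P) (h x)"
proof (induction P)
  case 0 then show ?case by (simp add: assms)
next
  case (pCons a P)
  then show ?case by (simp add: map_poly_pCons assms)
qed

definition hE :: "'a::comm_ring_1 poly \<Rightarrow> 'a poly \<Rightarrow> 'a poly poly \<Rightarrow> 'a poly" where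
  "hE X Y p = poly (map_poly (\<lambda>c. pcompose c X) p) Y"

lemma hE_0[simp]: "hE X Y 0 = 0" by (simp add: hE_def)

lemma hE_add: "hE X Y (p + q) = hE X Y p + hE X Y q"
  unfolding hE_def by (subst map_poly_add_hom) (auto simp: pcompose_add)

lemma hE_mult: "hE X Y (p * q) = hE X Y p * hE X Y q"
  unfolding hE_def by (subst map_poly_mult_hom) (auto simp: pcompose_add pcompose_mult)

lemma hE_bconst[simp]: "hE X Y (bconst c) = [:c:]"
  by (simp add: hE_def bconst_def map_poly_pCons)

lemma hE_alpha[simp]: "hE X Y alpha = X"
  by (simp add: hE_def alpha_def map_poly_pCons pcompose_pCons)

lemma hE_beta[simp]: "hE X Y beta = Y"
  by (simp add: hE_def beta_def map_poly_pCons pcompose_1)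

lemma hE_sigma:
  "hE X Y (bsigma u v p) = hE Y (smult u X + smult v Y) p"
proof -
  let ?h = "hE X Y"
  have h0: "?h 0 = 0" and ha: "\<And>a b. ?h (a + b) = ?h a + ?h b" and hm: "\<And>a b. ?h (a * b) = ?h a * ?h b"
    by (simp_all add: hE_add hE_mult)
  let ?phi = "\<lambda>c. poly (map_poly bconst c) beta"
  have phi0: "?phi 0 = 0" by simp
  have hphi: "?h (?phi c) = pcompose c Y" for c
  proof -
    have "?h (?phi c) = poly (map_poly ?h (map_poly bconst c)) Y"
      using poly_hom[OF h0 ha hm, of "map_poly bconst c" beta] by simp
    also have "map_poly ?h (map_poly bconst c) = map_poly (\<lambda>x. [:x:]) c"
      by (subst map_poly_map_poly) (auto simp: hE_bconst[unfolded bconst_def] bconst_def o_def)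
    finally show ?thesis by (simp add: pcompose_altdef)
  qed
  have "?h (bsigma u v p) = poly (map_poly ?h (map_poly ?phi p)) (?h (bconst u * alpha + bconst v * beta))"
    unfolding bsigma_def by (rule poly_hom[OF h0 ha hm])
  also have "map_poly ?h (map_poly ?phi p) = map_poly (\<lambda>c. pcompose c Y) p"
    by (subst map_poly_map_poly) (auto simp: o_def hphi)
  also have "?h (bconst u * alpha + bconst v * beta) = smult u X + smult v Y"
    by (simp add: hE_add hE_mult)
  finally show ?thesis by (simp add: hE_def)
qed

lemma poly_sum_le:
  fixes P :: "'a::comm_semiring_1 poly"
  assumes "degree P \<le> n"
  shows "poly P y = (\<Sum>i\<le>n. coeff P i * y ^ i)"
proof -
  have "poly P y = (\<Sum>i\<le>degree P. coeff P i * y ^ i)" by (simp add: poly_altdef)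
  also have "\<dots> = (\<Sum>i\<le>n. coeff P i * y ^ i)"
    by (rule sum.mono_neutral_left) (use assms in \<open>auto simp: coeff_eq_0\<close>)
  finally show ?thesis .
qed

lemma pcompose_power: "pcompose (p ^ n) q = (pcompose p q) ^ n"
  by (induction n) (simp_all add: pcompose_mult pcompose_1)

lemma pcompose_monom: "pcompose (monom a k) X = smult a (X ^ k)"
  by (simp add: monom_altdef pcompose_smult pcompose_power pcompose_pCons)

lemma hE_homog:
  assumes "homogeneous p"
  shows "hE X Y p = (\<Sum>j\<le>total_degree p. smult (coeff (coeff p j) (total_degree p - j))
                      (X ^ (total_degree p - j) * Y ^ j))"
proof -
  define d where "d = total_degree p"
  have H: "coeff (coeff p j) i \<noteq> 0 \<Longrightarrow> i + j = d" for i j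
    using assms unfolding homogeneous_def d_def by blast
  have cz: "coeff p j = 0" if "j > d" for j
    using H that by (intro poly_eqI) force
  have cm: "coeff p j = monom (coeff (coeff p j) (d - j)) (d - j)" if "j \<le> d" for j
  proof (intro poly_eqI)
    fix i
      have "coeff (coeff p j) i \<noteq> 0 \<Longrightarrow> i = d - j" using H[where i=i and j=j] that by fastforce
      then show "coeff (coeff p j) i = coeff (monom (coeff (coeff p j) (d - j)) (d - j)) i"
        by (cases "i = d - j") (auto simp: coeff_monom)
  qed
  have dp: "degree p \<le> d" using cz by (intro degree_le) auto
  have "hE X Y p = (\<Sum>j\<le>d. coeff (map_poly (\<lambda>c. pcompose c X) p) j * Y ^ j)"
    unfolding hE_def
    by (rule poly_sum_le) (use dp map_poly_degree_leq order_trans in blast)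
  also have "\<dots> = (\<Sum>j\<le>d. smult (coeff (coeff p j) (d - j)) (X ^ (d - j) * Y ^ j))"
  proof (rule sum.cong[OF refl])
    fix j assume "j \<in> {..d}"
    then have "j \<le> d" by simp
    have "coeff (map_poly (\<lambda>c. pcompose c X) p) j = pcompose (coeff p j) X"
      by (simp add: coeff_map_poly)
    also have "\<dots> = smult (coeff (coeff p j) (d - j)) (X ^ (d - j))"
      by (subst cm[OF \<open>j \<le> d\<close>]) (simp add: pcompose_monom)
    finally show "coeff (map_poly (\<lambda>c. pcompose c X) p) j * Y ^ j =
        smult (coeff (coeff p j) (d - j)) (X ^ (d - j) * Y ^ j)" by simp
  qed
  finally show ?thesis unfolding d_def .
qed

lemma smult_sum_right: "smult c (sum f S) = (\<Sum>i\<in>S. smult c (f i))"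
  by (induction S rule: infinite_finite_induct) (simp_all add: smult_add_right)

lemma hom_sum_zero:
  fixes A B :: "'a::field poly"
  assumes "poly B s0 = 0" "poly A s0 \<noteq> 0" "B \<noteq> 0"
  shows "(\<Sum>j\<le>d. smult (a j) (A ^ (d - j) * B ^ j)) = 0 \<Longrightarrow> j \<le> d \<Longrightarrow> a j = 0"
proof (induction d arbitrary: a j)
  case 0 then show ?case by simp
next
  case (Suc d)
  define S where "S = (\<Sum>i\<le>d. smult (a (Suc i)) (A ^ (d - i) * B ^ i))"
  have "(\<Sum>j\<le>Suc d. smult (a j) (A ^ (Suc d - j) * B ^ j))
      = smult (a 0) (A ^ Suc d) + (\<Sum>i\<le>d. smult (a (Suc i)) (A ^ (Suc d - Suc i) * B ^ Suc i))"
    by (subst sum.atMost_Suc_shift) simp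
  also have "(\<Sum>i\<le>d. smult (a (Suc i)) (A ^ (Suc d - Suc i) * B ^ Suc i)) = B * S"
    unfolding S_def by (simp add: sum_distrib_left mult_ac)
  finally have eq: "smult (a 0) (A ^ Suc d) + B * S = 0" using Suc.prems(1) by simp
  then have "poly (smult (a 0) (A ^ Suc d) + B * S) s0 = 0" by simp
  then have a0: "a 0 = 0" using assms by simp
  with eq have "B * S = 0" by simp
  with assms have "S = 0" by simp
  then have IH: "i \<le> d \<Longrightarrow> a (Suc i) = 0" for i using Suc.IH[of "\<lambda>i. a (Suc i)" i] unfolding S_def by blast
  show ?case using a0 IH Suc.prems(2) by (cases j) auto
qed

lemma hE_scale:
  assumes "homogeneous p"
  shows "hE (smult k (pcompose X R)) (smult k (pcompose Y R)) p
         = smult (k ^ total_degree p) (pcompose (hE X Y p) R)"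
proof -
  define d where "d = total_degree p"
  define a where "a j = coeff (coeff p j) (d - j)" for j
  have "hE (smult k (pcompose X R)) (smult k (pcompose Y R)) p
      = (\<Sum>j\<le>d. smult (a j) ((smult k (pcompose X R)) ^ (d - j) * (smult k (pcompose Y R)) ^ j))"
    unfolding hE_homog[OF assms] d_def a_def ..
  also have "\<dots> = (\<Sum>j\<le>d. smult (k ^ d) (pcompose (smult (a j) (X ^ (d - j) * Y ^ j)) R))"
  proof (rule sum.cong[OF refl])
    fix j assume "j \<in> {..d}"
    then have kk: "k ^ (d - j) * k ^ j = k ^ d" by (simp add: power_add[symmetric])
    show "smult (a j) ((smult k (pcompose X R)) ^ (d - j) * (smult k (pcompose Y R)) ^ j)
        = smult (k ^ d) (pcompose (smult (a j) (X ^ (d - j) * Y ^ j)) R)"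
      by (simp add: smult_power pcompose_smult pcompose_mult pcompose_power kk[symmetric] mult_ac)
  qed
  also have "\<dots> = smult (k ^ d) (pcompose (hE X Y p) R)"
    unfolding hE_homog[OF assms] d_def a_def by (simp add: pcompose_sum smult_sum_right)
  finally show ?thesis unfolding d_def .
qed

lemma hE_degree:
  assumes "homogeneous p" "degree X \<le> 1" "degree Y \<le> 1"
  shows "degree (hE X Y p) \<le> total_degree p"
  unfolding hE_homog[OF assms(1)]
proof (rule degree_sum_le)
  fix j assume "j \<in> {..total_degree p}"
  define d where "d = total_degree p"
  have "degree (smult (coeff (coeff p j) (d - j)) (X ^ (d - j) * Y ^ j)) \<le> degree (X ^ (d - j) * Y ^ j)"
    by (rule degree_smult_le)
  also have "\<dots> \<le> degree (X ^ (d - j)) + degree (Y ^ j)" by (rule degree_mult_le)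
  also have "\<dots> \<le> degree X * (d - j) + degree Y * j" by (intro add_mono degree_power_le)
  also have "\<dots> \<le> (d - j) + j" using assms(2,3) by (intro add_mono) auto
  also have "\<dots> = d" using \<open>j \<in> {..total_degree p}\<close> d_def by simp
  finally show "degree (smult (coeff (coeff p j) (total_degree p - j)) (X ^ (total_degree p - j) * Y ^ j))
      \<le> total_degree p" unfolding d_def .
qed simp

lemma eigen_eq:
  assumes "eigenvalue_A u v l"
  shows "l * l = u + v * l"
proof -
  obtain x1 x2 where ne: "(x1, x2) \<noteq> (0, 0)" and e1: "0 * x1 + u * x2 = l * x1"
    and e2: "1 * x1 + v * x2 = l * x2" using assms unfolding eigenvalue_A_def by blast
  have x1: "x1 = (l - v) * x2" using e2 by (simp add: algebra_simps)
  have "x2 \<noteq> 0" using ne x1 by auto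
  have "(u + v * l) * x2 = (l * l) * x2" using e1 x1 by (simp add: algebra_simps)
  with \<open>x2 \<noteq> 0\<close> show ?thesis by simp
qed

lemma hE_nonzero:
  fixes A B :: "'a::field poly"
  assumes "poly B s0 = 0" "poly A s0 \<noteq> 0" "B \<noteq> 0" "homogeneous p" "p \<noteq> 0"
  shows "hE A B p \<noteq> 0"
proof
  assume h: "hE A B p = 0"
  define d where "d = total_degree p"
  obtain j where "coeff p j \<noteq> 0" using assms(5) by (metis leading_coeff_0_iff)
  then obtain i where ij: "coeff (coeff p j) i \<noteq> 0" by (metis leading_coeff_0_iff)
  then have "i + j = d" using assms(4) unfolding homogeneous_def d_def by blast
  then have jd: "j \<le> d" and i: "i = d - j" by auto
  have "coeff (coeff p j) (d - j) = 0"
    using hom_sum_zero[OF assms(1-3), of "\<lambda>j. coeff (coeff p j) (d - j)" d j] h jd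
    unfolding hE_homog[OF assms(4)] d_def by blast
  with ij i show False by simp
qed

theorem theorem2p2:
  fixes u v c l1 l2 :: "'a::field"
    and p q :: "'a poly poly"
  assumes "u \<noteq> 0"
    and "eigenvalue_A u v l1" and "eigenvalue_A u v l2" and "l1 \<noteq> l2"
    and "\<not> root_of_unity (l1 / l2)"
    and "p \<noteq> 0" and "q \<noteq> 0" and "homogeneous p" and "homogeneous q"
    and "c \<noteq> 0"
    and "fsigma u v p q = Fract (bconst c) 1 * Fract p q"
  shows "\<exists>i::int. - int (total_degree q) \<le> i \<and> i \<le> int (total_degree p) \<and>
           fsigma u v p q / Fract p q =
             Fract (bconst (l1 powi i * l2 powi (int (total_degree p) - int (total_degree q) - i))) 1"
proof -
  have l1sq: "l1 * l1 = u + v * l1" and l2sq: "l2 * l2 = u + v * l2"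
    using eigen_eq assms(2,3) by blast+
  have l1ne: "l1 \<noteq> 0" using l1sq assms(1) by auto
  have l2ne: "l2 \<noteq> 0" using l2sq assms(1) by auto
  define A :: "'a poly" where "A = [:1, 1:]"
  define B :: "'a poly" where "B = [:l2, l1:]"
  define r where "r = l1 / l2"
  define R :: "'a poly" where "R = [:0, r:]"
  define C where "C = smult u A + smult v B"
  have rne: "r \<noteq> 0" using l1ne l2ne r_def by simp
  have BA: "smult l2 (pcompose A R) = B"
    using l2ne by (simp add: A_def B_def R_def r_def pcompose_pCons)
  have CB: "smult l2 (pcompose B R) = C"
    using l2ne by (simp add: A_def B_def C_def R_def r_def pcompose_pCons field_simps)
      (use l1sq l2sq in \<open>simp add: mult.commute\<close>)
  have sig: "hE A B (bsigma u v p') = smult (l2 ^ total_degree p') (pcompose (hE A B p') R)"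
    if "homogeneous p'" for p'
    using hE_scale[OF that, of l2 A R B] by (simp add: hE_sigma BA CB C_def)
  define s0 where "s0 = - l2 / l1"
  have pB: "poly B s0 = 0" using l1ne by (simp add: B_def s0_def)
  have pA: "poly A s0 \<noteq> 0" using l1ne assms(4) by (simp add: A_def s0_def field_simps)
  have Bne: "B \<noteq> 0" using l1ne by (simp add: B_def)
  define P where "P = hE A B p"
  define Q where "Q = hE A B q"
  have Pne: "P \<noteq> 0" unfolding P_def by (rule hE_nonzero[OF pB pA Bne assms(8,6)])
  have Qne: "Q \<noteq> 0" unfolding Q_def by (rule hE_nonzero[OF pB pA Bne assms(9,7)])
  have degA: "degree A \<le> 1" and degB: "degree B \<le> 1" by (simp_all add: A_def B_def)
  define dp where "dp = total_degree p"
  define dq where "dq = total_degree q"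
  define kp where "kp = degree P"
  define kq where "kq = degree Q"
  have kp: "kp \<le> dp" unfolding kp_def dp_def P_def by (rule hE_degree[OF assms(8) degA degB])
  have kq: "kq \<le> dq" unfolding kq_def dq_def Q_def by (rule hE_degree[OF assms(9) degA degB])
  have bc: "bconst c \<noteq> 0" using assms(10) by (simp add: bconst_def)
  have rhs: "Fract (bconst c) 1 * Fract p q = Fract (bconst c * p) q" by simp
  have sq: "bsigma u v q \<noteq> 0"
  proof
    assume "bsigma u v q = 0"
    then have "fsigma u v p q = 0" by (simp add: fsigma_def eq_fract(2) Zero_fract_def)
    then have "Fract (bconst c * p) q = Fract 0 1" using assms(11) rhs by (simp add: Zero_fract_def)
    then have "bconst c * p = 0" using assms(7) by (simp add: eq_fract(1))
    with bc assms(6) show False by simp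
  qed
  have key: "bsigma u v p * q = bconst c * p * bsigma u v q"
    using assms(11) rhs sq assms(7) by (simp add: fsigma_def eq_fract(1))
  then have "hE A B (bsigma u v p * q) = hE A B (bconst c * p * bsigma u v q)" by simp
  then have "smult (l2 ^ dp) (pcompose P R) * Q = [:c:] * P * smult (l2 ^ dq) (pcompose Q R)"
    by (simp add: hE_mult sig assms(8,9) P_def Q_def dp_def dq_def)
  then have "lead_coeff (smult (l2 ^ dp) (pcompose P R) * Q) = lead_coeff ([:c:] * P * smult (l2 ^ dq) (pcompose Q R))"
    by simp
  then have "l2 ^ dp * (lead_coeff P * r ^ kp) * lead_coeff Q = c * lead_coeff P * (l2 ^ dq * (lead_coeff Q * r ^ kq))"
  proof -
    have LC: "lead_coeff (pcompose X R) = lead_coeff X * r ^ degree X" for X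
      by (subst lead_coeff_comp) (simp_all add: R_def rne)
    have LCc: "lead_coeff [:c:] = c" by simp
    show "lead_coeff (smult (l2 ^ dp) (pcompose P R) * Q) = lead_coeff ([:c:] * P * smult (l2 ^ dq) (pcompose Q R))
      \<Longrightarrow> ?thesis"
      by (simp only: lead_coeff_mult lead_coeff_smult LC LCc kp_def kq_def)
  qed
  then have ceq: "l2 ^ dp * r ^ kp = c * l2 ^ dq * r ^ kq"
    using Pne Qne by (simp add: mult_ac)
  define i where "i = int kp - int kq"
  have cval: "c = l1 powi i * l2 powi (int dp - int dq - i)"
  proof -
    have e1: "l1 powi i = l1 ^ kp / l1 ^ kq" using l1ne by (simp add: i_def power_int_diff)
    have "int dp - int dq - i = int (dp + kq) - int (dq + kp)" by (simp add: i_def)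
    moreover have "l2 powi (int (dp + kq) - int (dq + kp)) = l2 ^ (dp + kq) / l2 ^ (dq + kp)"
      by (subst power_int_diff, simp add: l2ne, simp only: power_int_of_nat)
    ultimately have e2: "l2 powi (int dp - int dq - i) = l2 ^ (dp + kq) / l2 ^ (dq + kp)" by metis
    have "c = l2 ^ dp * r ^ kp / (l2 ^ dq * r ^ kq)" using ceq rne l2ne by (simp add: field_simps)
    also have "\<dots> = l1 ^ kp / l1 ^ kq * (l2 ^ (dp + kq) / l2 ^ (dq + kp))"
      using l1ne l2ne by (simp add: r_def power_divide power_add field_simps)
    finally show ?thesis using e1 e2 by simp
  qed
  have Fne: "Fract p q \<noteq> 0" using assms(6,7) by (simp add: Zero_fract_def eq_fract(1))
  have "fsigma u v p q / Fract p q = Fract (bconst c) 1"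
    unfolding assms(11) using Fne by (rule nonzero_mult_div_cancel_right)
  moreover have "- int dq \<le> i" "i \<le> int dp" using kp kq by (simp_all add: i_def)
  ultimately show ?thesis using cval unfolding dp_def dq_def by blast
qed

end
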